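(* If $2\le n\le 3$, then $\mathrm{A}=\mathrm{Q}=\mathrm{P}=\mathrm{Z}^\times(\mathrm{C}^{\times(0)}\cup\mathrm{C}^{\times(1)})$. If $n=4$, then $\mathrm{Q}\neq\mathrm{A}$.
   Context: Let $\mathrm{C}$ be either the real Clifford algebra $C\ell_{p,q}$ with $p+q=n$, or the complex Clifford algebra $C\ell(\mathbb{C}^n)$. It has identity $e$ and generators $e_1,\dots,e_n$ satisfying $e_ae_b+e_be_a=2\eta_{ab}e$. In the real case $\eta=\mathrm{diag}(1,\dots,1,-1,\dots,-1)$ with $p$ entries $+1$ and $q$ entries $-1$. In the complex case $\eta=I_n$. $\mathrm{C}^k$ is the grade-$k$ subspace, spanned by the products $e_{a_1}\cdots e_{a_k}$ with $a_1<\dots<a_k$. The even subspace is $\mathrm{C}^{(0)}=\bigoplus_{k\text{ even}}\mathrm{C}^k$ and the odd subspace is $\mathrm{C}^{(1)}=\bigoplus_{k\text{ odd}}\mathrm{C}^k$. The reversion $U\mapsto\tilde U$ is the linear anti-automorphism acting on $\mathrm{C}^k$ as $(-1)^{k(k-1)/2}$. For $S\subseteq\mathrm{C}$, $S^\times$ is the set of elements of $S$ invertible in $\mathrm{C}$, and $\mathrm{C}^{\times(j)}:=(\mathrm{C}^{(j)})^\times$. $\mathrm{Z}$ is the center: $\mathrm{Z}=\mathrm{C}^0$ for $n$ even and $\mathrm{Z}=\mathrm{C}^0\oplus\mathrm{C}^n$ for $n$ odd. Define: <ul> <li>$\mathrm{P}:=\mathrm{Z}^\times(\mathrm{C}^{\times(0)}\cup\mathrm{C}^{\times(1)})=\{WT: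 W\in\mathrm{Z}^\times, T\in\mathrm{C}^{\times(0)}\cup\mathrm{C}^{\times(1)}\}$;</li> <li>$\mathrm{A}:=\{T\in\mathrm{C}^\times:\tilde TT\in\mathrm{Z}^\times\}$;</li> <li>$\mathrm{Q}:=\{T\in\mathrm{P}:\tilde TT\in\mathrm{Z}^\times\}$.</li> </ul> *)

theory Defs
  imports Complex_Main
begin

text \<open>
  Concrete model of the Clifford algebra with n generators e_0,...,e_{n-1}
  (0-indexed) over a coefficient field 'a, with diagonal metric eta
  (e_i e_i = eta i, e_i e_j = - e_j e_i for i /= j).
  An element is a coefficient function on blades, i.e. on subsets of {..<n};
  the element x represents  sum over A of  x A * e_A,  where e_A is the
  increasingly ordered product of the generators indexed by A.
\<close>

type_synonym 'a mv = "nat set \<Rightarrow> 'a"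

definition cl :: "nat \<Rightarrow> 'a::field mv set" where
  "cl n = {x. \<forall>A. x A \<noteq> 0 \<longrightarrow> A \<subseteq> {..<n}}"

text \<open>Sign and metric factor in e_A e_B = bsign eta A B * e_(A symdiff B).\<close>
definition bsign :: "(nat \<Rightarrow> 'a::field) \<Rightarrow> nat set \<Rightarrow> nat set \<Rightarrow> 'a" where
  "bsign eta A B = (-1) ^ card {(a, b). a \<in> A \<and> b \<in> B \<and> b < a} * (\<Prod>i\<in>A \<inter> B. eta i)"

definition clmul :: "nat \<Rightarrow> (nat \<Rightarrow> 'a::field) \<Rightarrow> 'a mv \<Rightarrow> 'a mv \<Rightarrow> 'a mv" where
  "clmul n eta x y = (\<lambda>C. \<Sum>A\<in>Pow {..<n}. \<Sum>B\<in>Pow {..<n}.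
       if (A - B) \<union> (B - A) = C then x A * y B * bsign eta A B else 0)"

definition clone :: "'a::field mv" where
  "clone = (\<lambda>A. if A = {} then 1 else 0)"

definition clgen :: "nat \<Rightarrow> 'a::field mv" where
  "clgen i = (\<lambda>A. if A = {i} then 1 else 0)"

definition grade :: "nat \<Rightarrow> nat \<Rightarrow> 'a::field mv set" where
  "grade n k = {x \<in> cl n. \<forall>A. x A \<noteq> 0 \<longrightarrow> card A = k}"

definition even_part :: "nat \<Rightarrow> 'a::field mv set" where
  "even_part n = {x \<in> cl n. \<forall>A. x A \<noteq> 0 \<longrightarrow> even (card A)}"

definition odd_part :: "nat \<Rightarrow> 'a::field mv set" where
  "odd_part n = {x \<in> cl n. \<forall>A. x A \<noteq> 0 \<longrightarrow> odd (card A)}"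

definition clrev :: "'a::field mv \<Rightarrow> 'a mv" where
  "clrev x = (\<lambda>A. (-1) ^ (card A * (card A - 1) div 2) * x A)"

definition clinvertible :: "nat \<Rightarrow> (nat \<Rightarrow> 'a::field) \<Rightarrow> 'a mv \<Rightarrow> bool" where
  "clinvertible n eta x \<longleftrightarrow> x \<in> cl n \<and>
     (\<exists>y\<in>cl n. clmul n eta x y = clone \<and> clmul n eta y x = clone)"

definition units_in :: "nat \<Rightarrow> (nat \<Rightarrow> 'a::field) \<Rightarrow> 'a mv set \<Rightarrow> 'a mv set" where
  "units_in n eta S = {x \<in> S. clinvertible n eta x}"

definition clcenter :: "nat \<Rightarrow> (nat \<Rightarrow> 'a::field) \<Rightarrow> 'a mv set" where
  "clcenter n eta = {z \<in> cl n. \<forall>x\<in>cl n. clmul n eta z x = clmul n eta x z}"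

definition Pset :: "nat \<Rightarrow> (nat \<Rightarrow> 'a::field) \<Rightarrow> 'a mv set" where
  "Pset n eta = {clmul n eta w t | w t. w \<in> units_in n eta (clcenter n eta) \<and>
      t \<in> units_in n eta (even_part n) \<union> units_in n eta (odd_part n)}"

definition Aset :: "nat \<Rightarrow> (nat \<Rightarrow> 'a::field) \<Rightarrow> 'a mv set" where
  "Aset n eta = {t \<in> units_in n eta (cl n).
      clmul n eta (clrev t) t \<in> units_in n eta (clcenter n eta)}"

definition Qset :: "nat \<Rightarrow> (nat \<Rightarrow> 'a::field) \<Rightarrow> 'a mv set" where
  "Qset n eta = {t \<in> Pset n eta.
      clmul n eta (clrev t) t \<in> units_in n eta (clcenter n eta)}"

definition sig :: "nat \<Rightarrow> nat \<Rightarrow> 'a::field" where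
  "sig p i = (if i < p then 1 else -1)"

end

theory Submission
  imports Defs
begin


definition sd :: "nat set \<Rightarrow> nat set \<Rightarrow> nat set" where
  "sd A B = (A - B) \<union> (B - A)"

definition canon :: "nat \<Rightarrow> nat \<Rightarrow> nat set \<Rightarrow> nat set" where
  "canon m n S = S \<inter> {m..<n}"

lemma canon_less: "m < n \<Longrightarrow> canon m n S = (if m \<in> S then insert m (canon (m+1) n S) else canon (m+1) n S)"
  unfolding canon_def by (auto simp: Suc_le_eq le_less)

lemma canon_ge: "\<not> m < n \<Longrightarrow> canon m n S = {}"
  unfolding canon_def by auto

lemma canon_id: "S \<subseteq> {..<n} \<Longrightarrow> canon 0 n S = S"
  unfolding canon_def by auto

lemma sd_iff: "(A - B) \<union> (B - A) = C \<longleftrightarrow> B = sd A C"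
  unfolding sd_def by auto

lemma clmul_coord:
  assumes "C \<subseteq> {..<n}"
  shows "clmul n eta x y C = (\<Sum>A\<in>Pow {0..<n}. x A * y (canon 0 n (sd A C)) * bsign eta A (canon 0 n (sd A C)))"
proof -
  have "clmul n eta x y C = (\<Sum>A\<in>Pow {..<n}. x A * y (sd A C) * bsign eta A (sd A C))"
    unfolding clmul_def
  proof (rule sum.cong[OF refl])
    fix A assume A: "A \<in> Pow {..<n}"
    have s: "sd A C \<in> Pow {..<n}" using A assms unfolding sd_def by auto
    show "(\<Sum>B\<in>Pow {..<n}. if (A - B) \<union> (B - A) = C then x A * y B * bsign eta A B else 0) =
        x A * y (sd A C) * bsign eta A (sd A C)"
      unfolding sd_iff using s by (simp add: sum.delta')
  qed
  also have "\<dots> = (\<Sum>A\<in>Pow {0..<n}. x A * y (canon 0 n (sd A C)) * bsign eta A (canon 0 n (sd A C)))"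
  proof (rule sum.cong)
    show "Pow {..<n} = Pow {0..<n}" by auto
  next
    fix A assume A: "A \<in> Pow {0..<n}"
    have "sd A C \<subseteq> {..<n}" using A assms unfolding sd_def by auto
    then show "x A * y (sd A C) * bsign eta A (sd A C) = x A * y (canon 0 n (sd A C)) * bsign eta A (canon 0 n (sd A C))"
      by (simp add: canon_id)
  qed
  finally show ?thesis .
qed

lemma clmul_out:
  assumes "\<not> C \<subseteq> {..<n}"
  shows "clmul n eta x y C = 0"
  unfolding clmul_def
proof (rule sum.neutral, rule ballI)
  fix A assume A: "A \<in> Pow {..<n}"
  show "(\<Sum>B\<in>Pow {..<n}. if (A - B) \<union> (B - A) = C then x A * y B * bsign eta A B else 0) = 0"
  proof (rule sum.neutral, rule ballI)
    fix B assume "B \<in> Pow {..<n}"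
    then have "(A - B) \<union> (B - A) \<noteq> C" using A assms by auto
    then show "(if (A - B) \<union> (B - A) = C then x A * y B * bsign eta A B else 0) = 0" by simp
  qed
qed

lemma sum_Pow_split:
  assumes "m < n"
  shows "(\<Sum>A\<in>Pow {(m::nat)..<n}. f A) = (\<Sum>A\<in>Pow {m+1..<n}. f A) + (\<Sum>A\<in>Pow {m+1..<n}. f (insert m A))"
proof -
  have e: "{m..<n} = insert m {Suc m..<n}" using assms by auto
  have d: "Pow {Suc m..<n} \<inter> insert m ` Pow {Suc m..<n} = {}" by auto
  have i: "inj_on (insert m) (Pow {Suc m..<n})"
    by (rule inj_onI) (metis Diff_insert_absorb PowD atLeastLessThan_iff not_less_eq_eq order_refl subset_iff)
  show ?thesis unfolding e Pow_insert Suc_eq_plus1[symmetric]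
    by (simp add: sum.union_disjoint d sum.reindex i)
qed

lemma sum_Pow_base: "(\<Sum>A\<in>Pow {(n::nat)..<n}. f A) = f {}"
proof -
  have "Pow {n..<n} = {{}}" by auto
  then show ?thesis by simp
qed

lemma card_pairs:
  assumes "finite A" "finite B"
  shows "card {(a, b). a \<in> A \<and> b \<in> B \<and> b < a} = (\<Sum>a\<in>A. \<Sum>b\<in>B. if b < a then 1 else 0)"
proof -
  have "{(a, b). a \<in> A \<and> b \<in> B \<and> b < a} = (SIGMA a:A. {b\<in>B. b < a})" by auto
  then have "card {(a, b). a \<in> A \<and> b \<in> B \<and> b < a} = (\<Sum>a\<in>A. card {b\<in>B. b < a})"
    using assms by (simp add: card_SigmaI)
  also have "\<dots> = (\<Sum>a\<in>A. \<Sum>b\<in>B. if b < a then 1 else 0)"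
    using assms by (simp add: sum.inter_filter[symmetric])
  finally show ?thesis .
qed

lemma bsign_eval:
  assumes "finite A" "finite B"
  shows "bsign eta A B = (if even (\<Sum>a\<in>A. \<Sum>b\<in>B. if b < a then 1 else 0::nat) then 1 else -1) * (\<Prod>i\<in>A \<inter> B. eta i)"
  unfolding bsign_def card_pairs[OF assms] by simp

lemmas cl_simps = clmul_coord sum_Pow_split sum_Pow_base canon_less canon_ge sd_def bsign_eval


lemma numsuc: "Suc 0 = 1" "Suc 1 = 2" "Suc 2 = 3" "Suc 3 = 4" by simp_all

lemma ball_Pow_split:
  assumes "m < n"
  shows "(\<forall>A\<in>Pow {(m::nat)..<n}. P A) \<longleftrightarrow> (\<forall>A\<in>Pow {m+1..<n}. P A) \<and> (\<forall>A\<in>Pow {m+1..<n}. P (insert m A))"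
proof -
  have e: "{m..<n} = insert m {Suc m..<n}" using assms by auto
  show ?thesis unfolding e Pow_insert Suc_eq_plus1[symmetric] by auto
qed

lemma ball_Pow_base: "(\<forall>A\<in>Pow {(n::nat)..<n}. P A) \<longleftrightarrow> P {}"
proof -
  have "Pow {n..<n} = {{}}" by auto
  then show ?thesis by simp
qed

lemma cl_eqI:
  assumes "x \<in> cl n" "y \<in> cl n" "\<forall>A\<in>Pow {0..<n}. x A = y A"
  shows "x = y"
proof
  fix A show "x A = y A"
  proof (cases "A \<subseteq> {..<n}")
    case True then have "A \<in> Pow {0..<n}" by auto
    then show ?thesis using assms(3) by blast
  next
    case False
    have "x A = 0" using assms(1) False unfolding cl_def by blast
    moreover have "y A = 0" using assms(2) False unfolding cl_def by blast
    ultimately show ?thesis by simp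
  qed
qed

lemma clmul_cl: "clmul n eta x y \<in> cl n"
  unfolding cl_def using clmul_out by blast

lemmas cl_simps2 = cl_simps ball_Pow_split ball_Pow_base


definition sc :: "'a::field \<Rightarrow> 'a mv \<Rightarrow> 'a mv" where "sc c x = (\<lambda>A. c * x A)"
definition evp :: "'a::field mv \<Rightarrow> 'a mv" where "evp x = (\<lambda>A. if even (card A) then x A else 0)"
definition odp :: "'a::field mv \<Rightarrow> 'a mv" where "odp x = (\<lambda>A. if odd (card A) then x A else 0)"

lemma sc_cl: "x \<in> cl n \<Longrightarrow> sc c x \<in> cl n" unfolding cl_def sc_def by auto
lemma clrev_cl: "x \<in> cl n \<Longrightarrow> clrev x \<in> cl n" unfolding cl_def clrev_def by auto
lemma clone_cl: "clone \<in> cl n" unfolding cl_def clone_def by auto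
lemma clgen_cl: "i < n \<Longrightarrow> clgen i \<in> cl n" unfolding cl_def clgen_def by auto
lemma evp_cl: "x \<in> cl n \<Longrightarrow> evp x \<in> cl n" unfolding cl_def evp_def by auto
lemma odp_cl: "x \<in> cl n \<Longrightarrow> odp x \<in> cl n" unfolding cl_def odp_def by auto
lemma evp_even: "x \<in> cl n \<Longrightarrow> evp x \<in> even_part n" unfolding even_part_def using evp_cl by (auto simp: evp_def)
lemma odp_odd: "x \<in> cl n \<Longrightarrow> odp x \<in> odd_part n" unfolding odd_part_def using odp_cl by (auto simp: odp_def)

lemma clmul_sc_left: "clmul n eta (sc c x) y = sc c (clmul n eta x y)"
  unfolding clmul_def sc_def by (auto simp: sum_distrib_left mult.assoc intro!: sum.cong)
lemma clmul_sc_right: "clmul n eta x (sc c y) = sc c (clmul n eta x y)"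
  unfolding clmul_def sc_def by (auto simp: sum_distrib_left mult.assoc mult.left_commute intro!: sum.cong)
lemma sc_sc: "sc a (sc b x) = sc (a * b) x" unfolding sc_def by (auto simp: mult.assoc)
lemma sc_one: "sc 1 x = x" unfolding sc_def by auto
lemma clrev_sc: "clrev (sc c x) = sc c (clrev x)" unfolding clrev_def sc_def by (auto simp: mult.left_commute)
lemma clrev_clone: "clrev clone = clone" unfolding clrev_def clone_def by auto
lemma clgen_lit: "finite A \<Longrightarrow> clgen i A = (if card A = 1 \<and> i \<in> A then 1 else 0)"
  unfolding clgen_def by (auto simp: card_Suc_eq)

locale cla =
  fixes n :: nat and eta :: "nat \<Rightarrow> 'a::field"
  assumes assoc: "x \<in> cl n \<Longrightarrow> y \<in> cl n \<Longrightarrow> z \<in> cl n \<Longrightarrow>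
      clmul n eta (clmul n eta x y) z = clmul n eta x (clmul n eta y z)"
  and mul1r: "x \<in> cl n \<Longrightarrow> clmul n eta x clone = x"
  and mul1l: "x \<in> cl n \<Longrightarrow> clmul n eta clone x = x"
  and revmul: "x \<in> cl n \<Longrightarrow> y \<in> cl n \<Longrightarrow> clrev (clmul n eta x y) = clmul n eta (clrev y) (clrev x)"
begin

lemma inv_mul:
  assumes "clinvertible n eta x" "clinvertible n eta y"
  shows "clinvertible n eta (clmul n eta x y)"
proof -
  obtain u where u: "u \<in> cl n" "clmul n eta x u = clone" "clmul n eta u x = clone" and x: "x \<in> cl n"
    using assms(1) unfolding clinvertible_def by blast
  obtain v where v: "v \<in> cl n" "clmul n eta y v = clone" "clmul n eta v y = clone" and y: "y \<in> cl n"
    using assms(2) unfolding clinvertible_def by blast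
  have "clmul n eta (clmul n eta x y) (clmul n eta v u) = clone"
    using u v x y by (simp add: assoc clmul_cl flip: assoc[of y v u] ) (simp add: assoc[symmetric] clmul_cl mul1l)
  moreover have "clmul n eta (clmul n eta v u) (clmul n eta x y) = clone"
    using u v x y by (simp add: assoc clmul_cl flip: assoc[of u x y]) (simp add: mul1l)
  ultimately show ?thesis unfolding clinvertible_def using clmul_cl by blast
qed

lemma inv_rev:
  assumes "clinvertible n eta x"
  shows "clinvertible n eta (clrev x)"
proof -
  obtain u where u: "u \<in> cl n" "clmul n eta x u = clone" "clmul n eta u x = clone" and x: "x \<in> cl n"
    using assms(1) unfolding clinvertible_def by blast
  have "clmul n eta (clrev x) (clrev u) = clone" using revmul[OF u(1) x] u by (simp add: clrev_clone)
  moreover have "clmul n eta (clrev u) (clrev x) = clone" using revmul[OF x u(1)] u by (simp add: clrev_clone)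
  ultimately show ?thesis unfolding clinvertible_def using clrev_cl x u by blast
qed

lemma sc_clone_mul: "x \<in> cl n \<Longrightarrow> clmul n eta (sc c clone) x = sc c x"
  by (simp add: clmul_sc_left mul1l)
lemma mul_sc_clone: "x \<in> cl n \<Longrightarrow> clmul n eta x (sc c clone) = sc c x"
  by (simp add: clmul_sc_right mul1r)

lemma sc_clone_center: "sc c clone \<in> clcenter n eta"
  unfolding clcenter_def using sc_clone_mul mul_sc_clone sc_cl[OF clone_cl] by auto

lemma sc_clone_inv:
  assumes "c \<noteq> 0" shows "clinvertible n eta (sc c clone)"
proof -
  have "clmul n eta (sc c clone) (sc (1/c) clone) = clone"
    using assms by (simp add: sc_clone_mul sc_cl clone_cl sc_sc sc_one)
  moreover have "clmul n eta (sc (1/c) clone) (sc c clone) = clone"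
    using assms by (simp add: sc_clone_mul sc_cl clone_cl sc_sc sc_one)
  ultimately show ?thesis unfolding clinvertible_def using sc_cl clone_cl by blast
qed

lemma PA_gen:
  assumes hw: "\<And>w. w \<in> clcenter n eta \<Longrightarrow> \<exists>s. clmul n eta (clrev w) w = sc s clone"
  and ht: "\<And>t. t \<in> even_part n \<union> odd_part n \<Longrightarrow> \<exists>s. clmul n eta (clrev t) t = sc s clone"
  and T: "T \<in> Pset n eta"
  shows "T \<in> units_in n eta (cl n) \<and> clmul n eta (clrev T) T \<in> units_in n eta (clcenter n eta)"
proof -
  obtain w t where Tw: "T = clmul n eta w t" and w: "w \<in> clcenter n eta" "clinvertible n eta w"
    and t: "t \<in> even_part n \<union> odd_part n" "clinvertible n eta t"
    using T unfolding Pset_def units_in_def by blast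
  have wc: "w \<in> cl n" using w unfolding clcenter_def by blast
  have tc: "t \<in> cl n" using t unfolding even_part_def odd_part_def by blast
  have Ti: "clinvertible n eta T" using inv_mul[OF w(2) t(2)] Tw by simp
  obtain s where s: "clmul n eta (clrev w) w = sc s clone" using hw[OF w(1)] by blast
  obtain r where r: "clmul n eta (clrev t) t = sc r clone" using ht[OF t(1)] by blast
  have "clmul n eta (clrev T) T = clmul n eta (clmul n eta (clrev t) (clrev w)) (clmul n eta w t)"
    using Tw revmul wc tc by simp
  also have "\<dots> = clmul n eta (clrev t) (clmul n eta (clmul n eta (clrev w) w) t)"
    using wc tc by (simp add: assoc clrev_cl clmul_cl)
  also have "\<dots> = sc (s * r) clone"
    using tc by (simp add: s sc_clone_mul clmul_sc_right r sc_sc clrev_cl)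
  finally have e: "clmul n eta (clrev T) T = sc (s * r) clone" .
  have "clinvertible n eta (clmul n eta (clrev T) T)" using inv_mul[OF inv_rev[OF Ti] Ti] .
  then show ?thesis using Ti e sc_clone_center unfolding units_in_def clinvertible_def by auto
qed

lemma final_gen:
  assumes PA: "\<And>T. T \<in> Pset n eta \<Longrightarrow> T \<in> units_in n eta (cl n) \<and> clmul n eta (clrev T) T \<in> units_in n eta (clcenter n eta)"
  and AP: "\<And>T. T \<in> Aset n eta \<Longrightarrow> T \<in> Pset n eta"
  shows "Aset n eta = Qset n eta \<and> Qset n eta = Pset n eta"
proof
  show "Aset n eta = Qset n eta"
  proof
    show "Aset n eta \<subseteq> Qset n eta" using AP unfolding Qset_def by (auto simp: Aset_def)
    show "Qset n eta \<subseteq> Aset n eta" using PA unfolding Qset_def Aset_def by auto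
  qed
  show "Qset n eta = Pset n eta" using PA unfolding Qset_def by auto
qed

lemma w_inv:
  assumes "clinvertible n eta T" "T = clmul n eta w t" "w \<in> cl n" "t \<in> cl n" "u \<in> cl n"
    "clmul n eta t u = clone" "clmul n eta u t = clone"
  shows "clinvertible n eta w"
proof -
  have "clmul n eta T u = w" using assms by (simp add: assoc mul1r)
  moreover have "clinvertible n eta u" using assms unfolding clinvertible_def by blast
  ultimately show ?thesis using inv_mul[OF assms(1)] by metis
qed

end




lemma mul2_e: "clmul 2 eta x y {} = x {} * y {} + x {0} * y {0} * eta 0 + x {1} * y {1} * eta 1 - x {0,1} * y {0,1} * eta 0 * eta 1"
  by (simp add: cl_simps del: One_nat_def)
lemma mul2_0: "clmul 2 eta x y {0} = x {} * y {0} + x {0} * y {} - x {1} * y {0,1} * eta 1 + x {0,1} * y {1} * eta 1"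
  by (simp add: cl_simps del: One_nat_def)
lemma mul2_1: "clmul 2 eta x y {1} = x {} * y {1} + x {0} * y {0,1} * eta 0 + x {1} * y {} - x {0,1} * y {0} * eta 0"
  by (simp add: cl_simps del: One_nat_def)
lemma mul2_01: "clmul 2 eta x y {0,1} = x {} * y {0,1} + x {0} * y {1} - x {1} * y {0} + x {0,1} * y {}"
  by (simp add: cl_simps del: One_nat_def)
lemmas mul2 = mul2_e mul2_0 mul2_1 mul2_01
lemma mul3_e: "clmul 3 eta x y {} = x {} * y {} + x {0} * y {0} * eta 0 + x {1} * y {1} * eta 1 + x {2} * y {2} * eta 2 - x {0,1} * y {0,1} * eta 0 * eta 1 - x {0,2} * y {0,2} * eta 0 * eta 2 - x {1,2} * y {1,2} * eta 1 * eta 2 - x {0,1,2} * y {0,1,2} * eta 0 * eta 1 * eta 2"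
  by (simp add: cl_simps del: One_nat_def)
lemma mul3_0: "clmul 3 eta x y {0} = x {} * y {0} + x {0} * y {} - x {1} * y {0,1} * eta 1 - x {2} * y {0,2} * eta 2 + x {0,1} * y {1} * eta 1 + x {0,2} * y {2} * eta 2 - x {1,2} * y {0,1,2} * eta 1 * eta 2 - x {0,1,2} * y {1,2} * eta 1 * eta 2"
  by (simp add: cl_simps del: One_nat_def)
lemma mul3_1: "clmul 3 eta x y {1} = x {} * y {1} + x {0} * y {0,1} * eta 0 + x {1} * y {} - x {2} * y {1,2} * eta 2 - x {0,1} * y {0} * eta 0 + x {0,2} * y {0,1,2} * eta 0 * eta 2 + x {1,2} * y {2} * eta 2 + x {0,1,2} * y {0,2} * eta 0 * eta 2"
  by (simp add: cl_simps del: One_nat_def)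
lemma mul3_2: "clmul 3 eta x y {2} = x {} * y {2} + x {0} * y {0,2} * eta 0 + x {1} * y {1,2} * eta 1 + x {2} * y {} - x {0,1} * y {0,1,2} * eta 0 * eta 1 - x {0,2} * y {0} * eta 0 - x {1,2} * y {1} * eta 1 - x {0,1,2} * y {0,1} * eta 0 * eta 1"
  by (simp add: cl_simps del: One_nat_def)
lemma mul3_01: "clmul 3 eta x y {0,1} = x {} * y {0,1} + x {0} * y {1} - x {1} * y {0} + x {2} * y {0,1,2} * eta 2 + x {0,1} * y {} - x {0,2} * y {1,2} * eta 2 + x {1,2} * y {0,2} * eta 2 + x {0,1,2} * y {2} * eta 2"
  by (simp add: cl_simps del: One_nat_def)
lemma mul3_02: "clmul 3 eta x y {0,2} = x {} * y {0,2} + x {0} * y {2} - x {1} * y {0,1,2} * eta 1 - x {2} * y {0} + x {0,1} * y {1,2} * eta 1 + x {0,2} * y {} - x {1,2} * y {0,1} * eta 1 - x {0,1,2} * y {1} * eta 1"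
  by (simp add: cl_simps del: One_nat_def)
lemma mul3_12: "clmul 3 eta x y {1,2} = x {} * y {1,2} + x {0} * y {0,1,2} * eta 0 + x {1} * y {2} - x {2} * y {1} - x {0,1} * y {0,2} * eta 0 + x {0,2} * y {0,1} * eta 0 + x {1,2} * y {} + x {0,1,2} * y {0} * eta 0"
  by (simp add: cl_simps del: One_nat_def)
lemma mul3_012: "clmul 3 eta x y {0,1,2} = x {} * y {0,1,2} + x {0} * y {1,2} - x {1} * y {0,2} + x {2} * y {0,1} + x {0,1} * y {2} - x {0,2} * y {1} + x {1,2} * y {0} + x {0,1,2} * y {}"
  by (simp add: cl_simps del: One_nat_def)
lemmas mul3 = mul3_e mul3_0 mul3_1 mul3_2 mul3_01 mul3_02 mul3_12 mul3_012
lemma mul4_e: "clmul 4 eta x y {} = x {} * y {} + x {0} * y {0} * eta 0 + x {1} * y {1} * eta 1 + x {2} * y {2} * eta 2 + x {3} * y {3} * eta 3 - x {0,1} * y {0,1} * eta 0 * eta 1 - x {0,2} * y {0,2} * eta 0 * eta 2 - x {0,3} * y {0,3} * eta 0 * eta 3 - x {1,2} * y {1,2} * eta 1 * eta 2 - x {1,3} * y {1,3} * eta 1 * eta 3 - x {2,3} * y {2,3} * eta 2 * eta 3 - x {0,1,2} * y {0,1,2} * eta 0 * eta 1 * eta 2 - x {0,1,3} * y {0,1,3} * eta 0 * eta 1 * eta 3 - x {0,2,3} * y {0,2,3} * eta 0 * eta 2 * eta 3 - x {1,2,3} * y {1,2,3} * eta 1 * eta 2 * eta 3 + x {0,1,2,3}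 * y {0,1,2,3} * eta 0 * eta 1 * eta 2 * eta 3"
  by (simp add: cl_simps del: One_nat_def)
lemma mul4_0: "clmul 4 eta x y {0} = x {} * y {0} + x {0} * y {} - x {1} * y {0,1} * eta 1 - x {2} * y {0,2} * eta 2 - x {3} * y {0,3} * eta 3 + x {0,1} * y {1} * eta 1 + x {0,2} * y {2} * eta 2 + x {0,3} * y {3} * eta 3 - x {1,2} * y {0,1,2} * eta 1 * eta 2 - x {1,3} * y {0,1,3} * eta 1 * eta 3 - x {2,3} * y {0,2,3} * eta 2 * eta 3 - x {0,1,2} * y {1,2} * eta 1 * eta 2 - x {0,1,3} * y {1,3} * eta 1 * eta 3 - x {0,2,3} * y {2,3} * eta 2 * eta 3 + x {1,2,3} * y {0,1,2,3} * eta 1 * eta 2 * eta 3 - x {0,1,2,3} * y {1,2,3} * eta 1 * eta 2 * eta 3"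
  by (simp add: cl_simps del: One_nat_def)
lemma mul4_1: "clmul 4 eta x y {1} = x {} * y {1} + x {0} * y {0,1} * eta 0 + x {1} * y {} - x {2} * y {1,2} * eta 2 - x {3} * y {1,3} * eta 3 - x {0,1} * y {0} * eta 0 + x {0,2} * y {0,1,2} * eta 0 * eta 2 + x {0,3} * y {0,1,3} * eta 0 * eta 3 + x {1,2} * y {2} * eta 2 + x {1,3} * y {3} * eta 3 - x {2,3} * y {1,2,3} * eta 2 * eta 3 + x {0,1,2} * y {0,2} * eta 0 * eta 2 + x {0,1,3} * y {0,3} * eta 0 * eta 3 - x {0,2,3} * y {0,1,2,3} * eta 0 * eta 2 * eta 3 - x {1,2,3} * y {2,3} * eta 2 * eta 3 + x {0,1,2,3} * y {0,2,3} * eta 0 * eta 2 * eta 3"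
  by (simp add: cl_simps del: One_nat_def)
lemma mul4_2: "clmul 4 eta x y {2} = x {} * y {2} + x {0} * y {0,2} * eta 0 + x {1} * y {1,2} * eta 1 + x {2} * y {} - x {3} * y {2,3} * eta 3 - x {0,1} * y {0,1,2} * eta 0 * eta 1 - x {0,2} * y {0} * eta 0 + x {0,3} * y {0,2,3} * eta 0 * eta 3 - x {1,2} * y {1} * eta 1 + x {1,3} * y {1,2,3} * eta 1 * eta 3 + x {2,3} * y {3} * eta 3 - x {0,1,2} * y {0,1} * eta 0 * eta 1 + x {0,1,3} * y {0,1,2,3} * eta 0 * eta 1 * eta 3 + x {0,2,3} * y {0,3} * eta 0 * eta 3 + x {1,2,3} * y {1,3} * eta 1 * eta 3 - x {0,1,2,3} * y {0,1,3} * eta 0 * eta 1 * eta 3"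
  by (simp add: cl_simps del: One_nat_def)
lemma mul4_3: "clmul 4 eta x y {3} = x {} * y {3} + x {0} * y {0,3} * eta 0 + x {1} * y {1,3} * eta 1 + x {2} * y {2,3} * eta 2 + x {3} * y {} - x {0,1} * y {0,1,3} * eta 0 * eta 1 - x {0,2} * y {0,2,3} * eta 0 * eta 2 - x {0,3} * y {0} * eta 0 - x {1,2} * y {1,2,3} * eta 1 * eta 2 - x {1,3} * y {1} * eta 1 - x {2,3} * y {2} * eta 2 - x {0,1,2} * y {0,1,2,3} * eta 0 * eta 1 * eta 2 - x {0,1,3} * y {0,1} * eta 0 * eta 1 - x {0,2,3} * y {0,2} * eta 0 * eta 2 - x {1,2,3} * y {1,2} * eta 1 * eta 2 + x {0,1,2,3} * y {0,1,2} * eta 0 * eta 1 * eta 2"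
  by (simp add: cl_simps del: One_nat_def)
lemma mul4_01: "clmul 4 eta x y {0,1} = x {} * y {0,1} + x {0} * y {1} - x {1} * y {0} + x {2} * y {0,1,2} * eta 2 + x {3} * y {0,1,3} * eta 3 + x {0,1} * y {} - x {0,2} * y {1,2} * eta 2 - x {0,3} * y {1,3} * eta 3 + x {1,2} * y {0,2} * eta 2 + x {1,3} * y {0,3} * eta 3 - x {2,3} * y {0,1,2,3} * eta 2 * eta 3 + x {0,1,2} * y {2} * eta 2 + x {0,1,3} * y {3} * eta 3 - x {0,2,3} * y {1,2,3} * eta 2 * eta 3 + x {1,2,3} * y {0,2,3} * eta 2 * eta 3 - x {0,1,2,3} * y {2,3} * eta 2 * eta 3"
  by (simp add: cl_simps del: One_nat_def)
lemma mul4_02: "clmul 4 eta x y {0,2} = x {} * y {0,2} + x {0} * y {2} - x {1} * y {0,1,2} * eta 1 - x {2} * y {0} + x {3} * y {0,2,3} * eta 3 + x {0,1} * y {1,2} * eta 1 + x {0,2} * y {} - x {0,3} * y {2,3} * eta 3 - x {1,2} * y {0,1} * eta 1 + x {1,3} * y {0,1,2,3} * eta 1 * eta 3 + x {2,3} * y {0,3} * eta 3 - x {0,1,2} * y {1} * eta 1 + x {0,1,3} * y {1,2,3} * eta 1 * eta 3 + x {0,2,3} * y {3} * eta 3 - x {1,2,3} * y {0,1,3} * eta 1 * eta 3 + x {0,1,2,3} * y {1,3} * eta 1 * eta 3"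
  by (simp add: cl_simps del: One_nat_def)
lemma mul4_03: "clmul 4 eta x y {0,3} = x {} * y {0,3} + x {0} * y {3} - x {1} * y {0,1,3} * eta 1 - x {2} * y {0,2,3} * eta 2 - x {3} * y {0} + x {0,1} * y {1,3} * eta 1 + x {0,2} * y {2,3} * eta 2 + x {0,3} * y {} - x {1,2} * y {0,1,2,3} * eta 1 * eta 2 - x {1,3} * y {0,1} * eta 1 - x {2,3} * y {0,2} * eta 2 - x {0,1,2} * y {1,2,3} * eta 1 * eta 2 - x {0,1,3} * y {1} * eta 1 - x {0,2,3} * y {2} * eta 2 + x {1,2,3} * y {0,1,2} * eta 1 * eta 2 - x {0,1,2,3} * y {1,2} * eta 1 * eta 2"
  by (simp add: cl_simps del: One_nat_def)
lemma mul4_12: "clmul 4 eta x y {1,2} = x {} * y {1,2} + x {0} * y {0,1,2} * eta 0 + x {1} * y {2} - x {2} * y {1} + x {3} * y {1,2,3} * eta 3 - x {0,1} * y {0,2} * eta 0 + x {0,2} * y {0,1} * eta 0 - x {0,3} * y {0,1,2,3} * eta 0 * eta 3 + x {1,2} * y {} - x {1,3} * y {2,3} * eta 3 + x {2,3} * y {1,3} * eta 3 + x {0,1,2} * y {0} * eta 0 - x {0,1,3} * y {0,2,3} * eta 0 * eta 3 + x {0,2,3} * y {0,1,3} * eta 0 * eta 3 + x {1,2,3} * y {3} * eta 3 - x {0,1,2,3} * y {0,3} * eta 0 * eta 3"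
  by (simp add: cl_simps del: One_nat_def)
lemma mul4_13: "clmul 4 eta x y {1,3} = x {} * y {1,3} + x {0} * y {0,1,3} * eta 0 + x {1} * y {3} - x {2} * y {1,2,3} * eta 2 - x {3} * y {1} - x {0,1} * y {0,3} * eta 0 + x {0,2} * y {0,1,2,3} * eta 0 * eta 2 + x {0,3} * y {0,1} * eta 0 + x {1,2} * y {2,3} * eta 2 + x {1,3} * y {} - x {2,3} * y {1,2} * eta 2 + x {0,1,2} * y {0,2,3} * eta 0 * eta 2 + x {0,1,3} * y {0} * eta 0 - x {0,2,3} * y {0,1,2} * eta 0 * eta 2 - x {1,2,3} * y {2} * eta 2 + x {0,1,2,3} * y {0,2} * eta 0 * eta 2"
  by (simp add: cl_simps del: One_nat_def)
lemma mul4_23: "clmul 4 eta x y {2,3} = x {} * y {2,3} + x {0} * y {0,2,3} * eta 0 + x {1} * y {1,2,3} * eta 1 + x {2} * y {3} - x {3} * y {2} - x {0,1} * y {0,1,2,3} * eta 0 * eta 1 - x {0,2} * y {0,3} * eta 0 + x {0,3} * y {0,2} * eta 0 - x {1,2} * y {1,3} * eta 1 + x {1,3} * y {1,2} * eta 1 + x {2,3} * y {} - x {0,1,2} * y {0,1,3} * eta 0 * eta 1 + x {0,1,3} * y {0,1,2} * eta 0 * eta 1 + x {0,2,3} * y {0} * eta 0 + x {1,2,3} * y {1} * eta 1 - x {0,1,2,3} * y {0,1} * eta 0 * eta 1"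
  by (simp add: cl_simps del: One_nat_def)
lemma mul4_012: "clmul 4 eta x y {0,1,2} = x {} * y {0,1,2} + x {0} * y {1,2} - x {1} * y {0,2} + x {2} * y {0,1} - x {3} * y {0,1,2,3} * eta 3 + x {0,1} * y {2} - x {0,2} * y {1} + x {0,3} * y {1,2,3} * eta 3 + x {1,2} * y {0} - x {1,3} * y {0,2,3} * eta 3 + x {2,3} * y {0,1,3} * eta 3 + x {0,1,2} * y {} - x {0,1,3} * y {2,3} * eta 3 + x {0,2,3} * y {1,3} * eta 3 - x {1,2,3} * y {0,3} * eta 3 + x {0,1,2,3} * y {3} * eta 3"
  by (simp add: cl_simps del: One_nat_def)
lemma mul4_013: "clmul 4 eta x y {0,1,3} = x {} * y {0,1,3} + x {0} * y {1,3} - x {1} * y {0,3} + x {2} * y {0,1,2,3} * eta 2 + x {3} * y {0,1} + x {0,1} * y {3} - x {0,2} * y {1,2,3} * eta 2 - x {0,3} * y {1} + x {1,2} * y {0,2,3} * eta 2 + x {1,3} * y {0} - x {2,3} * y {0,1,2} * eta 2 + x {0,1,2} * y {2,3} * eta 2 + x {0,1,3} * y {} - x {0,2,3} * y {1,2} * eta 2 + x {1,2,3} * y {0,2} * eta 2 - x {0,1,2,3} * y {2} * eta 2"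
  by (simp add: cl_simps del: One_nat_def)
lemma mul4_023: "clmul 4 eta x y {0,2,3} = x {} * y {0,2,3} + x {0} * y {2,3} - x {1} * y {0,1,2,3} * eta 1 - x {2} * y {0,3} + x {3} * y {0,2} + x {0,1} * y {1,2,3} * eta 1 + x {0,2} * y {3} - x {0,3} * y {2} - x {1,2} * y {0,1,3} * eta 1 + x {1,3} * y {0,1,2} * eta 1 + x {2,3} * y {0} - x {0,1,2} * y {1,3} * eta 1 + x {0,1,3} * y {1,2} * eta 1 + x {0,2,3} * y {} - x {1,2,3} * y {0,1} * eta 1 + x {0,1,2,3} * y {1} * eta 1"
  by (simp add: cl_simps del: One_nat_def)
lemma mul4_123: "clmul 4 eta x y {1,2,3} = x {} * y {1,2,3} + x {0} * y {0,1,2,3} * eta 0 + x {1} * y {2,3} - x {2} * y {1,3} + x {3} * y {1,2} - x {0,1} * y {0,2,3} * eta 0 + x {0,2} * y {0,1,3} * eta 0 - x {0,3} * y {0,1,2} * eta 0 + x {1,2} * y {3} - x {1,3} * y {2} + x {2,3} * y {1} + x {0,1,2} * y {0,3} * eta 0 - x {0,1,3} * y {0,2} * eta 0 + x {0,2,3} * y {0,1} * eta 0 + x {1,2,3} * y {} - x {0,1,2,3} * y {0} * eta 0"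
  by (simp add: cl_simps del: One_nat_def)
lemma mul4_0123: "clmul 4 eta x y {0,1,2,3} = x {} * y {0,1,2,3} + x {0} * y {1,2,3} - x {1} * y {0,2,3} + x {2} * y {0,1,3} - x {3} * y {0,1,2} + x {0,1} * y {2,3} - x {0,2} * y {1,3} + x {0,3} * y {1,2} + x {1,2} * y {0,3} - x {1,3} * y {0,2} + x {2,3} * y {0,1} + x {0,1,2} * y {3} - x {0,1,3} * y {2} + x {0,2,3} * y {1} - x {1,2,3} * y {0} + x {0,1,2,3} * y {}"
  by (simp add: cl_simps del: One_nat_def)
lemmas mul4 = mul4_e mul4_0 mul4_1 mul4_2 mul4_3 mul4_01 mul4_02 mul4_03 mul4_12 mul4_13 mul4_23 mul4_012 mul4_013 mul4_023 mul4_123 mul4_0123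



lemmas cls = ball_Pow_split ball_Pow_base clrev_def sc_def clone_def evp_def odp_def clgen_lit

lemma cla3: "cla 3 (eta :: nat \<Rightarrow> 'a::field)"
proof
  fix x y z :: "'a mv" assume "x \<in> cl 3" "y \<in> cl 3" "z \<in> cl 3"
  show "clmul 3 eta (clmul 3 eta x y) z = clmul 3 eta x (clmul 3 eta y z)"
    apply (rule cl_eqI[OF clmul_cl clmul_cl])
    apply (simp add: cls mul3 del: One_nat_def)
    apply (simp add: algebra_simps)
    done
next
  fix x :: "'a mv" assume x: "x \<in> cl 3"
  show "clmul 3 eta x clone = x"
    apply (rule cl_eqI[OF clmul_cl x])
    apply (simp add: cls mul3 del: One_nat_def)
    done
  show "clmul 3 eta clone x = x"
    apply (rule cl_eqI[OF clmul_cl x])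
    apply (simp add: cls mul3 del: One_nat_def)
    done
next
  fix x y :: "'a mv" assume "x \<in> cl 3" "y \<in> cl 3"
  show "clrev (clmul 3 eta x y) = clmul 3 eta (clrev y) (clrev x)"
    apply (rule cl_eqI[OF clrev_cl[OF clmul_cl] clmul_cl])
    apply (simp add: cls mul3 del: One_nat_def)
    done
qed

lemma center3:
  fixes z :: "'a::field_char_0 mv"
  assumes "z \<in> clcenter 3 eta" "\<And>i. eta i \<noteq> 0"
  shows "z {0} = 0 \<and> z {1} = 0 \<and> z {2} = 0 \<and> z {0,1} = 0 \<and> z {0,2} = 0 \<and> z {1,2} = 0"
proof -
  have c: "\<And>x. x \<in> cl 3 \<Longrightarrow> clmul 3 eta z x = clmul 3 eta x z" using assms(1) unfolding clcenter_def by blast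
  have e: "\<And>i A. i < 3 \<Longrightarrow> clmul 3 eta z (clgen i) A = clmul 3 eta (clgen i) z A" using c clgen_cl by metis
  have "z {0} = 0" using e[of 1 "{0,1}"] by (simp add: cls mul3 del: One_nat_def)
  moreover have "z {1} = 0" using e[of 0 "{0,1}"] by (simp add: cls mul3 del: One_nat_def)
  moreover have "z {2} = 0" using e[of 0 "{0,2}"] by (simp add: cls mul3 del: One_nat_def)
  moreover have "z {0,1} = 0" using e[of 0 "{1}"] assms(2) by (simp add: cls mul3 del: One_nat_def)
  moreover have "z {0,2} = 0" using e[of 0 "{2}"] assms(2) by (simp add: cls mul3 del: One_nat_def)
  moreover have "z {1,2} = 0" using e[of 1 "{2}"] assms(2) by (simp add: cls mul3 del: One_nat_def)
  ultimately show ?thesis by blast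
qed

lemma S3_form:
  fixes T :: "'a::field mv"
  assumes "T \<in> cl 3"
  shows "clmul 3 eta (clrev T) T {0,1} = 0 \<and> clmul 3 eta (clrev T) T {0,2} = 0 \<and>
         clmul 3 eta (clrev T) T {1,2} = 0 \<and> clmul 3 eta (clrev T) T {0,1,2} = 0"
  by (simp add: cls mul3 del: One_nat_def)


definition W3 :: "'a::field \<Rightarrow> 'a \<Rightarrow> 'a mv" where
  "W3 a b = (\<lambda>A. if A \<subseteq> {..<3} then (if card A = 0 then a else if card A = 3 then b else 0) else 0)"

lemma W3_cl: "W3 a b \<in> cl 3" unfolding W3_def cl_def by auto

lemmas cls3 = cls W3_def mul3

lemma W3_center: "W3 a b \<in> clcenter 3 (eta :: nat \<Rightarrow> 'a::field)"
  unfolding clcenter_def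
proof (intro CollectI conjI ballI W3_cl)
  fix x :: "'a mv" assume x: "x \<in> cl 3"
  show "clmul 3 eta (W3 a b) x = clmul 3 eta x (W3 a b)"
    apply (rule cl_eqI[OF clmul_cl clmul_cl])
    apply (simp add: cls3 del: One_nat_def)
    done
qed

lemma sc_center: "w \<in> clcenter n eta \<Longrightarrow> sc c w \<in> clcenter n eta"
  unfolding clcenter_def by (auto simp: sc_cl clmul_sc_left clmul_sc_right)

lemma even3: "t \<in> even_part 3 \<Longrightarrow> t {0} = 0 \<and> t {1} = 0 \<and> t {2} = 0 \<and> t {0,1,2} = 0"
proof -
  assume "t \<in> even_part 3"
  then have h: "\<And>A. odd (card A) \<Longrightarrow> t A = 0" unfolding even_part_def by blast
  show ?thesis using h[of "{0}"] h[of "{1}"] h[of "{2}"] h[of "{0,1,2}"] by simp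
qed

lemma odd3: "t \<in> odd_part 3 \<Longrightarrow> t {} = 0 \<and> t {0,1} = 0 \<and> t {0,2} = 0 \<and> t {1,2} = 0"
proof -
  assume "t \<in> odd_part 3"
  then have h: "\<And>A. even (card A) \<Longrightarrow> t A = 0" unfolding odd_part_def by blast
  show ?thesis using h[of "{}"] h[of "{0,1}"] h[of "{0,2}"] h[of "{1,2}"] by simp
qed

lemma revsq3_even:
  assumes "t \<in> even_part 3" shows "clmul 3 eta (clrev t) t = sc (clmul 3 eta (clrev t) t {}) clone"
  apply (rule cl_eqI[OF clmul_cl sc_cl[OF clone_cl]])
  using even3[OF assms] by (simp add: cls3 del: One_nat_def)

lemma revsq3_odd:
  assumes "t \<in> odd_part 3" shows "clmul 3 eta (clrev t) t = sc (clmul 3 eta (clrev t) t {}) clone"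
  apply (rule cl_eqI[OF clmul_cl sc_cl[OF clone_cl]])
  using odd3[OF assms] by (simp add: cls3 del: One_nat_def)

lemma PA3:
  fixes T :: "'a::field_char_0 mv"
  assumes eta: "\<And>i. eta i \<noteq> 0" and T: "T \<in> Pset 3 eta"
  shows "T \<in> units_in 3 eta (cl 3) \<and> clmul 3 eta (clrev T) T \<in> units_in 3 eta (clcenter 3 eta)"
proof -
  interpret cla 3 eta by (rule cla3)
  show ?thesis
  proof (rule PA_gen[OF _ _ T])
    fix w assume w: "w \<in> clcenter 3 eta"
    have wz: "w {0} = 0 \<and> w {1} = 0 \<and> w {2} = 0 \<and> w {0,1} = 0 \<and> w {0,2} = 0 \<and> w {1,2} = 0"
      using center3[OF w eta] .
    have "clmul 3 eta (clrev w) w = sc (clmul 3 eta (clrev w) w {}) clone"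
      apply (rule cl_eqI[OF clmul_cl sc_cl[OF clone_cl]])
      using wz by (simp add: cls3 del: One_nat_def)
    then show "\<exists>s. clmul 3 eta (clrev w) w = sc s clone" by blast
  next
    fix t :: "'a mv" assume "t \<in> even_part 3 \<union> odd_part 3"
    then show "\<exists>s. clmul 3 eta (clrev t) t = sc s clone" using revsq3_even revsq3_odd by blast
  qed
qed

lemma AP3:
  fixes T :: "'a::field_char_0 mv"
  assumes eta: "\<And>i. eta i \<noteq> 0" and T: "T \<in> Aset 3 eta"
  shows "T \<in> Pset 3 eta"
proof -
  interpret cla 3 eta by (rule cla3)
  have Tc: "T \<in> cl 3" and Ti: "clinvertible 3 eta T" and Sz: "clmul 3 eta (clrev T) T \<in> clcenter 3 eta"
    and Si: "clinvertible 3 eta (clmul 3 eta (clrev T) T)"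
    using T unfolding Aset_def units_in_def by auto
  define S where "S = clmul 3 eta (clrev T) T"
  have S0: "S {0} = 0" "S {1} = 0" "S {2} = 0" using center3[OF Sz[folded S_def] eta] by auto
  have Sf: "S = sc (S {}) clone" unfolding S_def
    apply (rule cl_eqI[OF clmul_cl sc_cl[OF clone_cl]])
    using S0[unfolded S_def] by (simp add: cls3 del: One_nat_def)
  have Sne: "S {} \<noteq> 0"
  proof
    assume h: "S {} = 0"
    obtain y where y: "y \<in> cl 3" "clmul 3 eta S y = clone" using Si[folded S_def] unfolding clinvertible_def by blast
    have "clmul 3 eta S y = sc 0 y" using y(1) Sf h by (simp add: sc_clone_mul)
    then have "clone {} = (0::'a)" using y(2) by (metis sc_def mult_zero_left)
    then show False by (simp add: clone_def)
  qed
  define X where "X = evp T"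
  define V where "V = odp T"
  define ce where "ce = clmul 3 eta (clrev X) X {}"
  define co where "co = clmul 3 eta (clrev V) V {}"
  define mu where "mu = clmul 3 eta (clrev X) V {0,1,2}"
  have Xc: "X \<in> cl 3" "X \<in> even_part 3" unfolding X_def using Tc evp_cl evp_even by auto
  have Vc: "V \<in> cl 3" "V \<in> odd_part 3" unfolding V_def using Tc odp_cl odp_odd by auto
  have Ssum: "S {} = ce + co" unfolding S_def ce_def co_def X_def V_def
    by (simp add: cls3 del: One_nat_def)
  show ?thesis
  proof (cases "ce = 0")
    case False
    have k1: "clmul 3 eta (W3 ce mu) X = sc ce T"
      apply (rule cl_eqI[OF clmul_cl sc_cl[OF Tc]])
      using S0 unfolding S_def ce_def mu_def X_def V_def
      apply (simp add: cls3 del: One_nat_def)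
      apply (intro conjI; algebra)
      done
    have k2: "clmul 3 eta X (clrev X) = sc ce clone"
      apply (rule cl_eqI[OF clmul_cl sc_cl[OF clone_cl]])
      using even3[OF Xc(2)] unfolding ce_def by (simp add: cls3 del: One_nat_def)
    have k3: "clmul 3 eta (clrev X) X = sc ce clone"
      using revsq3_even[OF Xc(2)] unfolding ce_def .
    define u where "u = sc (1/ce) (clrev X)"
    have uc: "u \<in> cl 3" unfolding u_def using Xc by (simp add: sc_cl clrev_cl)
    have u1: "clmul 3 eta X u = clone" "clmul 3 eta u X = clone" unfolding u_def
      using False k2 k3 by (simp_all add: clmul_sc_left clmul_sc_right sc_sc sc_one)
    define w where "w = sc (1/ce) (W3 ce mu)"
    have wc: "w \<in> cl 3" unfolding w_def by (simp add: sc_cl W3_cl)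
    have Tw: "T = clmul 3 eta w X" unfolding w_def using False k1 by (simp add: clmul_sc_left sc_sc sc_one)
    have wz: "w \<in> clcenter 3 eta" unfolding w_def by (rule sc_center[OF W3_center])
    have wi: "clinvertible 3 eta w" using w_inv[OF Ti Tw wc Xc(1) uc u1] .
    have Xi: "clinvertible 3 eta X" unfolding clinvertible_def using Xc uc u1 by blast
    show ?thesis unfolding Pset_def units_in_def using Tw wz wi Xc Xi by blast
  next
    case True
    then have coz: "co \<noteq> 0" using Sne Ssum by simp
    have k1: "clmul 3 eta (W3 co (- mu)) V = sc co T"
      apply (rule cl_eqI[OF clmul_cl sc_cl[OF Tc]])
      using S0 True unfolding S_def co_def ce_def mu_def X_def V_def
      apply (simp add: cls3 del: One_nat_def)
      apply (intro conjI; algebra)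
      done
    have k2: "clmul 3 eta V (clrev V) = sc co clone"
      apply (rule cl_eqI[OF clmul_cl sc_cl[OF clone_cl]])
      using odd3[OF Vc(2)] unfolding co_def by (simp add: cls3 del: One_nat_def)
    have k3: "clmul 3 eta (clrev V) V = sc co clone"
      using revsq3_odd[OF Vc(2)] unfolding co_def .
    define u where "u = sc (1/co) (clrev V)"
    have uc: "u \<in> cl 3" unfolding u_def using Vc by (simp add: sc_cl clrev_cl)
    have u1: "clmul 3 eta V u = clone" "clmul 3 eta u V = clone" unfolding u_def
      using coz k2 k3 by (simp_all add: clmul_sc_left clmul_sc_right sc_sc sc_one)
    define w where "w = sc (1/co) (W3 co (- mu))"
    have wc: "w \<in> cl 3" unfolding w_def by (simp add: sc_cl W3_cl)
    have Tw: "T = clmul 3 eta w V" unfolding w_def using coz k1 by (simp add: clmul_sc_left sc_sc sc_one)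
    have wz: "w \<in> clcenter 3 eta" unfolding w_def by (rule sc_center[OF W3_center])
    have wi: "clinvertible 3 eta w" using w_inv[OF Ti Tw wc Vc(1) uc u1] .
    have Vi: "clinvertible 3 eta V" unfolding clinvertible_def using Vc uc u1 by blast
    show ?thesis unfolding Pset_def units_in_def using Tw wz wi Vc Vi by blast
  qed
qed

lemma main3:
  fixes eta :: "nat \<Rightarrow> 'a::field_char_0"
  assumes eta: "\<And>i. eta i \<noteq> 0"
  shows "Aset 3 eta = Qset 3 eta \<and> Qset 3 eta = Pset 3 eta"
proof -
  interpret cla 3 eta by (rule cla3)
  show ?thesis
  proof (rule final_gen)
    fix T assume "T \<in> Pset 3 eta"
    then show "T \<in> units_in 3 eta (cl 3) \<and> clmul 3 eta (clrev T) T \<in> units_in 3 eta (clcenter 3 eta)"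
      using PA3[where eta=eta] eta by blast
  next
    fix T assume "T \<in> Aset 3 eta"
    then show "T \<in> Pset 3 eta" using AP3[where eta=eta] eta by blast
  qed
qed




lemmas cls2 = cls mul2

lemma cla2: "cla 2 (eta :: nat \<Rightarrow> 'a::field)"
proof
  fix x y z :: "'a mv" assume "x \<in> cl 2" "y \<in> cl 2" "z \<in> cl 2"
  show "clmul 2 eta (clmul 2 eta x y) z = clmul 2 eta x (clmul 2 eta y z)"
    apply (rule cl_eqI[OF clmul_cl clmul_cl])
    apply (simp add: cls2 del: One_nat_def)
    apply (simp add: algebra_simps)
    done
next
  fix x :: "'a mv" assume x: "x \<in> cl 2"
  show "clmul 2 eta x clone = x"
    apply (rule cl_eqI[OF clmul_cl x])
    apply (simp add: cls2 del: One_nat_def)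
    done
  show "clmul 2 eta clone x = x"
    apply (rule cl_eqI[OF clmul_cl x])
    apply (simp add: cls2 del: One_nat_def)
    done
next
  fix x y :: "'a mv" assume "x \<in> cl 2" "y \<in> cl 2"
  show "clrev (clmul 2 eta x y) = clmul 2 eta (clrev y) (clrev x)"
    apply (rule cl_eqI[OF clrev_cl[OF clmul_cl] clmul_cl])
    apply (simp add: cls2 del: One_nat_def)
    done
qed

lemma center2:
  fixes z :: "'a::field_char_0 mv"
  assumes "z \<in> clcenter 2 eta" "\<And>i. eta i \<noteq> 0"
  shows "z {0} = 0 \<and> z {1} = 0 \<and> z {0,1} = 0"
proof -
  have c: "\<And>x. x \<in> cl 2 \<Longrightarrow> clmul 2 eta z x = clmul 2 eta x z" using assms(1) unfolding clcenter_def by blast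
  have e: "\<And>i A. i < 2 \<Longrightarrow> clmul 2 eta z (clgen i) A = clmul 2 eta (clgen i) z A" using c clgen_cl by metis
  have "z {0} = 0" using e[of 1 "{0,1}"] by (simp add: cls2 del: One_nat_def)
  moreover have "z {1} = 0" using e[of 0 "{0,1}"] by (simp add: cls2 del: One_nat_def)
  moreover have "z {0,1} = 0" using e[of 0 "{1}"] assms(2) by (simp add: cls2 del: One_nat_def)
  ultimately show ?thesis by blast
qed

lemma even2: "t \<in> even_part 2 \<Longrightarrow> t {0} = 0 \<and> t {1} = 0"
proof -
  assume "t \<in> even_part 2"
  then have h: "\<And>A. odd (card A) \<Longrightarrow> t A = 0" unfolding even_part_def by blast
  show ?thesis using h[of "{0}"] h[of "{1}"] by simp
qed

lemma odd2: "t \<in> odd_part 2 \<Longrightarrow> t {} = 0 \<and> t {0,1} = 0"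
proof -
  assume "t \<in> odd_part 2"
  then have h: "\<And>A. even (card A) \<Longrightarrow> t A = 0" unfolding odd_part_def by blast
  show ?thesis using h[of "{}"] h[of "{0,1}"] by simp
qed

lemma revsq2_even:
  assumes "t \<in> even_part 2" shows "clmul 2 eta (clrev t) t = sc (clmul 2 eta (clrev t) t {}) clone"
  apply (rule cl_eqI[OF clmul_cl sc_cl[OF clone_cl]])
  using even2[OF assms] by (simp add: cls2 del: One_nat_def)

lemma revsq2_odd:
  assumes "t \<in> odd_part 2" shows "clmul 2 eta (clrev t) t = sc (clmul 2 eta (clrev t) t {}) clone"
  apply (rule cl_eqI[OF clmul_cl sc_cl[OF clone_cl]])
  using odd2[OF assms] by (simp add: cls2 del: One_nat_def)

lemma PA2:
  fixes T :: "'a::field_char_0 mv"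
  assumes eta: "\<And>i. eta i \<noteq> 0" and T: "T \<in> Pset 2 eta"
  shows "T \<in> units_in 2 eta (cl 2) \<and> clmul 2 eta (clrev T) T \<in> units_in 2 eta (clcenter 2 eta)"
proof -
  interpret cla 2 eta by (rule cla2)
  show ?thesis
  proof (rule PA_gen[OF _ _ T])
    fix w assume w: "w \<in> clcenter 2 eta"
    have wz: "w {0} = 0 \<and> w {1} = 0 \<and> w {0,1} = 0"
      using center2[OF w eta] .
    have "clmul 2 eta (clrev w) w = sc (clmul 2 eta (clrev w) w {}) clone"
      apply (rule cl_eqI[OF clmul_cl sc_cl[OF clone_cl]])
      using wz by (simp add: cls2 del: One_nat_def)
    then show "\<exists>s. clmul 2 eta (clrev w) w = sc s clone" by blast
  next
    fix t :: "'a mv" assume "t \<in> even_part 2 \<union> odd_part 2"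
    then show "\<exists>s. clmul 2 eta (clrev t) t = sc s clone" using revsq2_even revsq2_odd by blast
  qed
qed

lemma AP2:
  fixes T :: "'a::field_char_0 mv"
  assumes eta: "\<And>i. eta i \<noteq> 0" and T: "T \<in> Aset 2 eta"
  shows "T \<in> Pset 2 eta"
proof -
  interpret cla 2 eta by (rule cla2)
  have Tc: "T \<in> cl 2" and Ti: "clinvertible 2 eta T" and Sz: "clmul 2 eta (clrev T) T \<in> clcenter 2 eta"
    and Si: "clinvertible 2 eta (clmul 2 eta (clrev T) T)"
    using T unfolding Aset_def units_in_def by auto
  define S where "S = clmul 2 eta (clrev T) T"
  have S0: "S {0} = 0" "S {1} = 0" using center2[OF Sz[folded S_def] eta] by auto
  have Sf: "S = sc (S {}) clone" unfolding S_def
    apply (rule cl_eqI[OF clmul_cl sc_cl[OF clone_cl]])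
    using S0[unfolded S_def] by (simp add: cls2 mult_ac del: One_nat_def)
  have Sne: "S {} \<noteq> 0"
  proof
    assume h: "S {} = 0"
    obtain y where y: "y \<in> cl 2" "clmul 2 eta S y = clone" using Si[folded S_def] unfolding clinvertible_def by blast
    have "clmul 2 eta S y = sc 0 y" using y(1) Sf h by (simp add: sc_clone_mul)
    then have "clone {} = (0::'a)" using y(2) by (metis sc_def mult_zero_left)
    then show False by (simp add: clone_def)
  qed
  define X where "X = evp T"
  define V where "V = odp T"
  define ce where "ce = clmul 2 eta (clrev X) X {}"
  define co where "co = clmul 2 eta (clrev V) V {}"
  have Xc: "X \<in> cl 2" "X \<in> even_part 2" unfolding X_def using Tc evp_cl evp_even by auto
  have Vc: "V \<in> cl 2" "V \<in> odd_part 2" unfolding V_def using Tc odp_cl odp_odd by auto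
  have Ssum: "S {} = ce + co" unfolding S_def ce_def co_def X_def V_def
    by (simp add: cls2 del: One_nat_def)
  show ?thesis
  proof (cases "ce = 0")
    case False
    have k1: "clmul 2 eta (sc ce clone) X = sc ce T"
      apply (rule cl_eqI[OF clmul_cl sc_cl[OF Tc]])
      using S0 unfolding S_def ce_def X_def V_def
      apply (simp add: cls2 del: One_nat_def)
      apply (intro conjI; algebra)
      done
    have k2: "clmul 2 eta X (clrev X) = sc ce clone"
      apply (rule cl_eqI[OF clmul_cl sc_cl[OF clone_cl]])
      using even2[OF Xc(2)] unfolding ce_def by (simp add: cls2 del: One_nat_def)
    have k3: "clmul 2 eta (clrev X) X = sc ce clone"
      using revsq2_even[OF Xc(2)] unfolding ce_def .
    define u where "u = sc (1/ce) (clrev X)"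
    have uc: "u \<in> cl 2" unfolding u_def using Xc by (simp add: sc_cl clrev_cl)
    have u1: "clmul 2 eta X u = clone" "clmul 2 eta u X = clone" unfolding u_def
      using False k2 k3 by (simp_all add: clmul_sc_left clmul_sc_right sc_sc sc_one)
    define w where "w = sc (1/ce) (sc ce (clone :: 'a mv))"
    have wc: "w \<in> cl 2" unfolding w_def by (simp add: sc_cl clone_cl)
    have Tw: "T = clmul 2 eta w X"
    proof -
      have "clmul 2 eta w X = sc (1/ce) (clmul 2 eta (sc ce clone) X)" unfolding w_def by (simp only: clmul_sc_left)
      also have "\<dots> = T" using False k1 by (simp add: sc_sc sc_one)
      finally show ?thesis by simp
    qed
    have wz: "w \<in> clcenter 2 eta" unfolding w_def by (rule sc_center[OF sc_clone_center])
    have wi: "clinvertible 2 eta w" using w_inv[OF Ti Tw wc Xc(1) uc u1] .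
    have Xi: "clinvertible 2 eta X" unfolding clinvertible_def using Xc uc u1 by blast
    show ?thesis unfolding Pset_def units_in_def using Tw wz wi Xc Xi by blast
  next
    case True
    then have coz: "co \<noteq> 0" using Sne Ssum by simp
    have k1: "clmul 2 eta (sc co clone) V = sc co T"
      apply (rule cl_eqI[OF clmul_cl sc_cl[OF Tc]])
      using S0 True unfolding S_def co_def ce_def X_def V_def
      apply (simp add: cls2 del: One_nat_def)
      apply (intro conjI; algebra)
      done
    have k2: "clmul 2 eta V (clrev V) = sc co clone"
      apply (rule cl_eqI[OF clmul_cl sc_cl[OF clone_cl]])
      using odd2[OF Vc(2)] unfolding co_def by (simp add: cls2 del: One_nat_def)
    have k3: "clmul 2 eta (clrev V) V = sc co clone"
      using revsq2_odd[OF Vc(2)] unfolding co_def .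
    define u where "u = sc (1/co) (clrev V)"
    have uc: "u \<in> cl 2" unfolding u_def using Vc by (simp add: sc_cl clrev_cl)
    have u1: "clmul 2 eta V u = clone" "clmul 2 eta u V = clone" unfolding u_def
      using coz k2 k3 by (simp_all add: clmul_sc_left clmul_sc_right sc_sc sc_one)
    define w where "w = sc (1/co) (sc co (clone :: 'a mv))"
    have wc: "w \<in> cl 2" unfolding w_def by (simp add: sc_cl clone_cl)
    have Tw: "T = clmul 2 eta w V"
    proof -
      have "clmul 2 eta w V = sc (1/co) (clmul 2 eta (sc co clone) V)" unfolding w_def by (simp only: clmul_sc_left)
      also have "\<dots> = T" using coz k1 by (simp add: sc_sc sc_one)
      finally show ?thesis by simp
    qed
    have wz: "w \<in> clcenter 2 eta" unfolding w_def by (rule sc_center[OF sc_clone_center])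
    have wi: "clinvertible 2 eta w" using w_inv[OF Ti Tw wc Vc(1) uc u1] .
    have Vi: "clinvertible 2 eta V" unfolding clinvertible_def using Vc uc u1 by blast
    show ?thesis unfolding Pset_def units_in_def using Tw wz wi Vc Vi by blast
  qed
qed

lemma main2:
  fixes eta :: "nat \<Rightarrow> 'a::field_char_0"
  assumes eta: "\<And>i. eta i \<noteq> 0"
  shows "Aset 2 eta = Qset 2 eta \<and> Qset 2 eta = Pset 2 eta"
proof -
  interpret cla 2 eta by (rule cla2)
  show ?thesis
  proof (rule final_gen)
    fix T assume "T \<in> Pset 2 eta"
    then show "T \<in> units_in 2 eta (cl 2) \<and> clmul 2 eta (clrev T) T \<in> units_in 2 eta (clcenter 2 eta)"
      using PA2[where eta=eta] eta by blast
  next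
    fix T assume "T \<in> Aset 2 eta"
    then show "T \<in> Pset 2 eta" using AP2[where eta=eta] eta by blast
  qed
qed




lemmas cls4 = cls mul4

lemma mul1r4: "x \<in> cl 4 \<Longrightarrow> clmul 4 eta x clone = x"
  apply (rule cl_eqI[OF clmul_cl]) apply assumption
  apply (simp add: cls4 del: One_nat_def)
  done

lemma mul1l4: "x \<in> cl 4 \<Longrightarrow> clmul 4 eta clone x = x"
  apply (rule cl_eqI[OF clmul_cl]) apply assumption
  apply (simp add: cls4 del: One_nat_def)
  done

lemma center4:
  fixes z :: "'a::field_char_0 mv"
  assumes "z \<in> clcenter 4 eta" "\<And>i. eta i \<noteq> 0"
  shows "z {0} = 0 \<and> z {1} = 0 \<and> z {2} = 0 \<and> z {3} = 0 \<and> z {0,1} = 0 \<and> z {0,2} = 0 \<and> z {0,3} = 0 \<and> z {1,2} = 0 \<and> z {1,3} = 0 \<and> z {2,3} = 0 \<and> z {0,1,2} = 0 \<and> z {0,1,3} = 0 \<and> z {0,2,3} = 0 \<and> z {1,2,3} = 0 \<and> z {0,1,2,3} = 0"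
proof -
  have c: "\<And>x. x \<in> cl 4 \<Longrightarrow> clmul 4 eta z x = clmul 4 eta x z" using assms(1) unfolding clcenter_def by blast
  have e: "\<And>i A. i < 4 \<Longrightarrow> clmul 4 eta z (clgen i) A = clmul 4 eta (clgen i) z A" using c clgen_cl by metis
  have z0: "z {0} = 0" using e[of 1 "{0,1}"] assms(2) by (simp add: cls4 del: One_nat_def)
  have z1: "z {1} = 0" using e[of 0 "{0,1}"] assms(2) by (simp add: cls4 del: One_nat_def)
  have z2: "z {2} = 0" using e[of 0 "{0,2}"] assms(2) by (simp add: cls4 del: One_nat_def)
  have z3: "z {3} = 0" using e[of 0 "{0,3}"] assms(2) by (simp add: cls4 del: One_nat_def)
  have z01: "z {0,1} = 0" using e[of 0 "{1}"] assms(2) by (simp add: cls4 del: One_nat_def)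
  have z02: "z {0,2} = 0" using e[of 0 "{2}"] assms(2) by (simp add: cls4 del: One_nat_def)
  have z03: "z {0,3} = 0" using e[of 0 "{3}"] assms(2) by (simp add: cls4 del: One_nat_def)
  have z12: "z {1,2} = 0" using e[of 1 "{2}"] assms(2) by (simp add: cls4 del: One_nat_def)
  have z13: "z {1,3} = 0" using e[of 1 "{3}"] assms(2) by (simp add: cls4 del: One_nat_def)
  have z23: "z {2,3} = 0" using e[of 2 "{3}"] assms(2) by (simp add: cls4 del: One_nat_def)
  have z012: "z {0,1,2} = 0" using e[of 3 "{0,1,2,3}"] assms(2) by (simp add: cls4 del: One_nat_def)
  have z013: "z {0,1,3} = 0" using e[of 2 "{0,1,2,3}"] assms(2) by (simp add: cls4 del: One_nat_def)
  have z023: "z {0,2,3} = 0" using e[of 1 "{0,1,2,3}"] assms(2) by (simp add: cls4 del: One_nat_def)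
  have z123: "z {1,2,3} = 0" using e[of 0 "{0,1,2,3}"] assms(2) by (simp add: cls4 del: One_nat_def)
  have z0123: "z {0,1,2,3} = 0" using e[of 0 "{1,2,3}"] assms(2) by (simp add: cls4 del: One_nat_def)
  show ?thesis using z0 z1 z2 z3 z01 z02 z03 z12 z13 z23 z012 z013 z023 z123 z0123 by blast
qed

definition T4 :: "'a::field mv" where
  "T4 = (\<lambda>A. if A = {} then 1 else if A \<subseteq> {..<3} \<and> card A = 3 then 2 else 0)"

lemma T4_cl: "T4 \<in> cl 4" unfolding T4_def cl_def by auto

lemma main4:
  fixes eta :: "nat \<Rightarrow> 'a::field_char_0"
  assumes eta: "\<And>i. eta i = 1 \<or> eta i = -1"
  shows "Qset 4 eta \<noteq> Aset 4 eta"
proof -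
  have etanz: "\<And>i. eta i \<noteq> 0" using eta by (metis neg_0_equal_iff_equal zero_neq_one)
  define c where "c = clmul 4 eta (clrev T4) (T4 :: 'a mv) {}"
  have cval: "c = 1 + 4 * (eta 0 * eta 1 * eta 2)" unfolding c_def
    by (simp add: cls4 T4_def del: One_nat_def)
  have cnz: "c \<noteq> 0"
  proof -
    have "eta 0 * eta 1 * eta 2 = 1 \<or> eta 0 * eta 1 * eta 2 = -1"
      using eta[of 0] eta[of 1] eta[of 2] by auto
    then show ?thesis unfolding cval by auto
  qed
  have k1: "clmul 4 eta (clrev T4) T4 = sc c clone"
    apply (rule cl_eqI[OF clmul_cl sc_cl[OF clone_cl]])
    unfolding c_def by (simp add: cls4 T4_def del: One_nat_def)
  have k2: "clmul 4 eta T4 (clrev T4) = sc c clone"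
    apply (rule cl_eqI[OF clmul_cl sc_cl[OF clone_cl]])
    unfolding c_def by (simp add: cls4 T4_def del: One_nat_def)
  define u where "u = sc (1/c) (clrev (T4 :: 'a mv))"
  have uc: "u \<in> cl 4" unfolding u_def by (simp add: sc_cl clrev_cl T4_cl)
  have u1: "clmul 4 eta T4 u = clone" "clmul 4 eta u T4 = clone" unfolding u_def
    using cnz k1 k2 by (simp_all add: clmul_sc_left clmul_sc_right sc_sc sc_one)
  have Ti: "clinvertible 4 eta T4" unfolding clinvertible_def using T4_cl uc u1 by blast
  have scm: "\<And>x d. x \<in> cl 4 \<Longrightarrow> clmul 4 eta (sc d clone) x = sc d x"
    by (simp add: clmul_sc_left mul1l4)
  have msc: "\<And>x d. x \<in> cl 4 \<Longrightarrow> clmul 4 eta x (sc d clone) = sc d x"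
    by (simp add: clmul_sc_right mul1r4)
  have Sz: "sc c clone \<in> clcenter 4 eta"
    unfolding clcenter_def using scm msc sc_cl[OF clone_cl] by auto
  have Si: "clinvertible 4 eta (sc c (clone :: 'a mv))"
  proof -
    have "clmul 4 eta (sc c clone) (sc (1/c) clone) = clone"
      using cnz by (simp add: scm sc_cl clone_cl sc_sc sc_one)
    moreover have "clmul 4 eta (sc (1/c) clone) (sc c clone) = clone"
      using cnz by (simp add: scm sc_cl clone_cl sc_sc sc_one)
    ultimately show ?thesis unfolding clinvertible_def using sc_cl clone_cl by blast
  qed
  have TA: "T4 \<in> Aset 4 eta" unfolding Aset_def units_in_def using T4_cl Ti k1 Sz Si by simp
  have TQ: "T4 \<notin> Qset 4 eta"
  proof
    assume "T4 \<in> Qset 4 eta"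
    then obtain w t where Tw: "T4 = clmul 4 eta w t" and w: "w \<in> clcenter 4 eta"
      and t: "t \<in> even_part 4 \<union> odd_part 4"
      unfolding Qset_def Pset_def units_in_def by blast
    have wz: "w {0} = 0 \<and> w {1} = 0 \<and> w {2} = 0 \<and> w {3} = 0 \<and> w {0,1} = 0 \<and> w {0,2} = 0 \<and> w {0,3} = 0 \<and> w {1,2} = 0 \<and> w {1,3} = 0 \<and> w {2,3} = 0 \<and> w {0,1,2} = 0 \<and> w {0,1,3} = 0 \<and> w {0,2,3} = 0 \<and> w {1,2,3} = 0 \<and> w {0,1,2,3} = 0" using center4[OF w etanz] .
    have e1: "T4 {} = w {} * t {}" unfolding Tw using wz by (simp add: cls4 del: One_nat_def)
    have e2: "T4 {0,1,2} = w {} * t {0,1,2}" unfolding Tw using wz by (simp add: cls4 del: One_nat_def)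
    have v1: "T4 {} = (1::'a)" by (simp add: T4_def)
    have v2: "T4 {0,1,2} = (2::'a)" by (simp add: T4_def)
    show False
    proof (cases "t \<in> even_part 4")
      case True
      then have "t {0,1,2} = 0" unfolding even_part_def by force
      then show False using e2 v2 by simp
    next
      case False
      then have "t \<in> odd_part 4" using t by blast
      then have "t {} = 0" unfolding odd_part_def by force
      then show False using e1 v1 by simp
    qed
  qed
  show ?thesis using TA TQ by blast
qed


lemma real_part:
  "let n = p + q; eta = (sig p :: nat \<Rightarrow> real) in
            (2 \<le> n \<and> n \<le> 3 \<longrightarrow> Aset n eta = Qset n eta \<and> Qset n eta = Pset n eta) \<and>
            (n = 4 \<longrightarrow> Qset n eta \<noteq> Aset n eta)"
proof -
  have e0: "\<And>i. (sig p i :: real) \<noteq> 0" by (simp add: sig_def)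
  have e1: "\<And>i. (sig p i :: real) = 1 \<or> sig p i = -1" by (simp add: sig_def)
  have a: "2 \<le> p + q \<and> p + q \<le> 3 \<longrightarrow> p + q = 2 \<or> p + q = 3" by arith
  have m2: "Aset 2 (sig p :: nat \<Rightarrow> real) = Qset 2 (sig p) \<and> Qset 2 (sig p :: nat \<Rightarrow> real) = Pset 2 (sig p)"
    using main2[where eta="sig p :: nat \<Rightarrow> real"] e0 by blast
  have m3: "Aset 3 (sig p :: nat \<Rightarrow> real) = Qset 3 (sig p) \<and> Qset 3 (sig p :: nat \<Rightarrow> real) = Pset 3 (sig p)"
    using main3[where eta="sig p :: nat \<Rightarrow> real"] e0 by blast
  have m4: "Qset 4 (sig p :: nat \<Rightarrow> real) \<noteq> Aset 4 (sig p)"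
    using main4[where eta="sig p :: nat \<Rightarrow> real"] e1 by blast
  show ?thesis unfolding Let_def using a m2 m3 m4 by auto
qed

lemma complex_part:
  "let eta = (\<lambda>_. 1) :: nat \<Rightarrow> complex in
            (2 \<le> n \<and> n \<le> 3 \<longrightarrow> Aset n eta = Qset n eta \<and> Qset n eta = Pset n eta) \<and>
            (n = 4 \<longrightarrow> Qset n eta \<noteq> Aset n eta)"
proof -
  have a: "2 \<le> n \<and> n \<le> 3 \<longrightarrow> n = 2 \<or> n = 3" by arith
  have m2: "Aset 2 (\<lambda>_. 1 :: complex) = Qset 2 (\<lambda>_. 1) \<and> Qset 2 (\<lambda>_. 1 :: complex) = Pset 2 (\<lambda>_. 1)"
    using main2[where eta="\<lambda>_. 1 :: complex"] by simp
  have m3: "Aset 3 (\<lambda>_. 1 :: complex) = Qset 3 (\<lambda>_. 1) \<and> Qset 3 (\<lambda>_. 1 :: complex) = Pset 3 (\<lambda>_. 1)"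
    using main3[where eta="\<lambda>_. 1 :: complex"] by simp
  have m4: "Qset 4 (\<lambda>_. 1 :: complex) \<noteq> Aset 4 (\<lambda>_. 1)"
    using main4[where eta="\<lambda>_. 1 :: complex"] by simp
  show ?thesis unfolding Let_def using a m2 m3 m4 by auto
qed

theorem mainTheorem15:
  shows "(\<forall>p q :: nat. let n = p + q; eta = (sig p :: nat \<Rightarrow> real) in
            (2 \<le> n \<and> n \<le> 3 \<longrightarrow> Aset n eta = Qset n eta \<and> Qset n eta = Pset n eta) \<and>
            (n = 4 \<longrightarrow> Qset n eta \<noteq> Aset n eta))
       \<and> (\<forall>n :: nat. let eta = (\<lambda>_. 1) :: nat \<Rightarrow> complex in
            (2 \<le> n \<and> n \<le> 3 \<longrightarrow> Aset n eta = Qset n eta \<and> Qset n eta = Pset n eta) \<and>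
            (n = 4 \<longrightarrow> Qset n eta \<noteq> Aset n eta))"
  using real_part complex_part by blast

end
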